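(* Let $r=1$ and let $g,d$ and ramification sequences $\alpha,\beta$ satisfy $\rho(g,r,d,\alpha,\beta)=0$. Then the EH group is the full symmetric group on $YT(g,r,d,\alpha,\beta)$.
   Context: Ramification sequences: $\alpha=(\alpha_0,\dots,\alpha_r)$ integers with $d-r\ge\alpha_0\ge\cdots\ge\alpha_r\ge0$, $|\alpha|=\sum\alpha_i$; $g-d+r\ge0$; $\rho(g,r,d,\alpha,\beta)=g-(r+1)(g-d+r)-|\alpha|-|\beta|$. Skew diagram $\sigma(g,r,d,\alpha,\beta)$ (with $m=g-d+r$): rows $k=1,\dots,r+1$ numbered top to bottom, row $k$ consisting of boxes $(k,c)$ with $\alpha_0-\alpha_{r+1-k}<c\le\alpha_0+m+\beta_{k-1}$ (columns numbered left to right); it has $g$ boxes when $\rho=0$. $YT(g,r,d,\alpha,\beta)$ is the set of standard Young tableaux of this shape: bijective fillings with $1,\dots,g$ strictly increasing along rows (left to right) and columns (top to bottom). The distance between boxes $(i,j),(i',j')$ is $|i-i'|+|j-j'|$. For $1\le t<g$ and $a>0$, $\pi_{t,a}$ is the permutation of $YT(g,r,d,\alpha,\beta)$ exchanging the entries $t$ and $t+1$ in every tableau where they lie in different rows and different columns at distance exactly $a$, and fixing all other tableaux. The EH group is the subgroup of the symmetric group on $YT(g,r,d,\alpha,\beta)$ generated by all $\pi_{t,a}$. *)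

theory Defs
  imports "HOL-Algebra.Bij" "HOL-Algebra.Generated_Groups"
begin

definition ram_seq :: "int \<Rightarrow> nat \<Rightarrow> int list \<Rightarrow> bool" where
  "ram_seq d r al \<longleftrightarrow> length al = r + 1 \<and> al ! 0 \<le> d - int r \<and> al ! r \<ge> 0
     \<and> (\<forall>i<r. al ! (Suc i) \<le> al ! i)"

definition brill_noether_rho :: "int \<Rightarrow> nat \<Rightarrow> int \<Rightarrow> int list \<Rightarrow> int list \<Rightarrow> int" where
  "brill_noether_rho g r d al be =
     g - (int r + 1) * (g - d + int r) - sum_list al - sum_list be"

(* boxes (k,c): row k (top to bottom, 1..r+1), column c (left to right) *)
definition skew_shape :: "int \<Rightarrow> nat \<Rightarrow> int \<Rightarrow> int list \<Rightarrow> int list \<Rightarrow> (int \<times> int) set" where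
  "skew_shape g r d al be =
     {(k, c). 1 \<le> k \<and> k \<le> int r + 1 \<and>
        al ! 0 - al ! nat (int r + 1 - k) < c \<and>
        c \<le> al ! 0 + (g - d + int r) + be ! nat (k - 1)}"

definition YT :: "int \<Rightarrow> nat \<Rightarrow> int \<Rightarrow> int list \<Rightarrow> int list \<Rightarrow> ((int \<times> int) \<Rightarrow> int) set" where
  "YT g r d al be =
     {T. bij_betw T (skew_shape g r d al be) {1..g}
       \<and> (\<forall>x. x \<notin> skew_shape g r d al be \<longrightarrow> T x = 0)
       \<and> (\<forall>i j j'. (i, j) \<in> skew_shape g r d al be \<and> (i, j') \<in> skew_shape g r d al be \<and> j < j'
                   \<longrightarrow> T (i, j) < T (i, j'))
       \<and> (\<forall>i i' j. (i, j) \<in> skew_shape g r d al be \<and> (i', j) \<in> skew_shape g r d al be \<and> i < i'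
                   \<longrightarrow> T (i, j) < T (i', j))}"

definition pos_of :: "((int \<times> int) \<Rightarrow> int) \<Rightarrow> int \<Rightarrow> int \<times> int" where
  "pos_of T t = (THE x. T x = t)"

definition box_dist :: "int \<times> int \<Rightarrow> int \<times> int \<Rightarrow> int" where
  "box_dist p q = \<bar>fst p - fst q\<bar> + \<bar>snd p - snd q\<bar>"

definition pi_ta :: "int \<Rightarrow> int \<Rightarrow> ((int \<times> int) \<Rightarrow> int) \<Rightarrow> ((int \<times> int) \<Rightarrow> int)" where
  "pi_ta t a T =
     (let p = pos_of T t; q = pos_of T (t + 1) in
      if fst p \<noteq> fst q \<and> snd p \<noteq> snd q \<and> box_dist p q = a
      then (\<lambda>x. if T x = t then t + 1 else if T x = t + 1 then t else T x)
      else T)"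

definition EH_group :: "int \<Rightarrow> nat \<Rightarrow> int \<Rightarrow> int list \<Rightarrow> int list
     \<Rightarrow> (((int \<times> int) \<Rightarrow> int) \<Rightarrow> ((int \<times> int) \<Rightarrow> int)) set" where
  "EH_group g r d al be =
     generate (BijGroup (YT g r d al be))
       {restrict (pi_ta t a) (YT g r d al be) | t a. 1 \<le> t \<and> t < g \<and> 0 < a}"

end

theory Submission
  imports Defs
begin

definition swv :: "int \<Rightarrow> ((int\<times>int)\<Rightarrow>int) \<Rightarrow> ((int\<times>int)\<Rightarrow>int)" where
  "swv t T = (\<lambda>x. if T x = t then t + 1 else if T x = t + 1 then t else T x)"

lemma swv_swv[simp]: "swv t (swv t T) = T" by (auto simp: swv_def fun_eq_iff)

lemma swv_comm: "t' \<noteq> t \<Longrightarrow> t' \<noteq> t+1 \<Longrightarrow> t'+1 \<noteq> t \<Longrightarrow> swv t' (swv t T) = swv t (swv t' T)"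
  by (auto simp: swv_def fun_eq_iff)

definition tau :: "'a set \<Rightarrow> 'a \<Rightarrow> 'a \<Rightarrow> ('a \<Rightarrow> 'a)" where
  "tau Y u v = (\<lambda>z\<in>Y. if z = u then v else if z = v then u else z)"

lemma tau_sym: "tau Y u v = tau Y v u"
  by (auto simp: tau_def fun_eq_iff)

lemma invol_Bij:
  assumes "\<And>z. z \<in> Y \<Longrightarrow> f z \<in> Y" "\<And>z. z \<in> Y \<Longrightarrow> f (f z) = z"
  shows "restrict f Y \<in> Bij Y"
proof -
  have "bij_betw f Y Y"
    by (rule bij_betw_byWitness[of Y f f]) (use assms in auto)
  then have "bij_betw (restrict f Y) Y Y"
    by (rule iffD1[OF bij_betw_cong, rotated]) simp
  then show ?thesis by (simp add: Bij_def)
qed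

lemma tau_Bij: "u \<in> Y \<Longrightarrow> v \<in> Y \<Longrightarrow> tau Y u v \<in> Bij Y"
proof -
  assume a: "u \<in> Y" "v \<in> Y"
  have "restrict (\<lambda>z. if z = u then v else if z = v then u else z) Y \<in> Bij Y"
    by (rule invol_Bij) (use a in auto)
  then show ?thesis by (simp add: tau_def)
qed

lemma BG_mult: "f \<in> Bij Y \<Longrightarrow> h \<in> Bij Y \<Longrightarrow> f \<otimes>\<^bsub>BijGroup Y\<^esub> h = compose Y f h"
  by (simp add: BijGroup_def)

lemma conj_tau:
  assumes f: "f \<in> Bij Y" and inv: "\<And>z. z \<in> Y \<Longrightarrow> f (f z) = z" and u: "u \<in> Y" and v: "v \<in> Y"
  shows "f \<otimes>\<^bsub>BijGroup Y\<^esub> (tau Y u v \<otimes>\<^bsub>BijGroup Y\<^esub> f) = tau Y (f u) (f v)"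
proof -
  have fY: "\<And>z. z \<in> Y \<Longrightarrow> f z \<in> Y" using f by (auto simp: Bij_def bij_betw_def)
  have tb: "tau Y u v \<in> Bij Y" using u v by (rule tau_Bij)
  have c: "compose Y (tau Y u v) f \<in> Bij Y" using tb f by (rule compose_Bij)
  have finj: "\<And>a b. a \<in> Y \<Longrightarrow> b \<in> Y \<Longrightarrow> f a = f b \<longleftrightarrow> a = b"
    using inv by metis
  have key: "\<And>w. w \<in> Y \<Longrightarrow> f (if w = u then v else if w = v then u else w)
      = (if f w = f u then f v else if f w = f v then f u else f w)"
    using finj u v by auto
  have "compose Y f (compose Y (tau Y u v) f) = tau Y (f u) (f v)"
  proof (rule ext)
    fix z show "compose Y f (compose Y (tau Y u v) f) z = tau Y (f u) (f v) z"
    proof (cases "z \<in> Y")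
      case True
      define w where "w = f z"
      have wY: "w \<in> Y" using fY[OF True] w_def by simp
      have zw: "z = f w" using inv[OF True] w_def by simp
      have L: "compose Y f (compose Y (tau Y u v) f) z = f (if w = u then v else if w = v then u else w)"
        using True wY by (simp add: compose_def tau_def w_def)
      have R: "tau Y (f u) (f v) z = (if f w = f u then f v else if f w = f v then f u else f w)"
        using True by (simp add: tau_def zw)
      show ?thesis unfolding L R using key[OF wY] .
    next
      case False then show ?thesis by (simp add: compose_def tau_def)
    qed
  qed
  then show ?thesis by (simp only: BG_mult[OF tb f] BG_mult[OF f c])
qed

definition hsw :: "int \<Rightarrow> int \<Rightarrow> int" where
  "hsw t x = (if x = t then t + 1 else if x = t + 1 then t else x)"

lemma swv_hsw: "swv t T = hsw t \<circ> T" by (simp add: swv_def hsw_def fun_eq_iff)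

lemma hsw_mono: "(a::int) < b \<Longrightarrow> \<not> (a = t \<and> b = t + 1) \<Longrightarrow> hsw t a < hsw t b"
  by (auto simp: hsw_def)

lemma hsw_bij: "1 \<le> t \<Longrightarrow> t < g \<Longrightarrow> bij_betw (hsw t) {1..g} {1..g}"
  by (rule bij_betw_byWitness[of _ "hsw t" "hsw t"]) (auto simp: hsw_def)

locale tab =
  fixes g s e1 e2 :: int and S :: "(int\<times>int) set" and Y :: "((int\<times>int) \<Rightarrow> int) set"
  assumes s0: "0 \<le> s" and e21: "e2 \<le> e1" and e20: "0 \<le> e2" and se1: "s \<le> e1"
    and gdef: "g = (e1 - s) + e2"
    and S_def: "S = {(k,c). (k = 1 \<and> s < c \<and> c \<le> e1) \<or> (k = 2 \<and> 0 < c \<and> c \<le> e2)}"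
    and Y_def: "Y = {T. bij_betw T S {1..g} \<and> (\<forall>x. x \<notin> S \<longrightarrow> T x = 0)
       \<and> (\<forall>i j j'. (i, j) \<in> S \<and> (i, j') \<in> S \<and> j < j' \<longrightarrow> T (i, j) < T (i, j'))
       \<and> (\<forall>i i' j. (i, j) \<in> S \<and> (i', j) \<in> S \<and> i < i' \<longrightarrow> T (i, j) < T (i', j))}"
begin

lemma mem1[simp]: "(1,c) \<in> S \<longleftrightarrow> s < c \<and> c \<le> e1" by (simp add: S_def)
lemma mem2[simp]: "(2,c) \<in> S \<longleftrightarrow> 0 < c \<and> c \<le> e2" by (simp add: S_def)
lemma memk: "x \<in> S \<Longrightarrow> fst x = 1 \<or> fst x = 2" by (auto simp: S_def)

lemma Y_bij: "T \<in> Y \<Longrightarrow> bij_betw T S {1..g}" by (simp add: Y_def)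
lemma Y_zero: "T \<in> Y \<Longrightarrow> x \<notin> S \<Longrightarrow> T x = 0" unfolding Y_def by blast
lemma Y_row: "T \<in> Y \<Longrightarrow> (i, j) \<in> S \<Longrightarrow> (i, j') \<in> S \<Longrightarrow> j < j' \<Longrightarrow> T (i, j) < T (i, j')"
  by (simp add: Y_def)
lemma Y_col: "T \<in> Y \<Longrightarrow> (i, j) \<in> S \<Longrightarrow> (i', j) \<in> S \<Longrightarrow> i < i' \<Longrightarrow> T (i, j) < T (i', j)"
  by (simp add: Y_def)
lemma Y_val: "T \<in> Y \<Longrightarrow> x \<in> S \<Longrightarrow> 1 \<le> T x \<and> T x \<le> g"
  using Y_bij bij_betwE by fastforce
lemma Y_inj: "T \<in> Y \<Longrightarrow> x \<in> S \<Longrightarrow> y \<in> S \<Longrightarrow> T x = T y \<Longrightarrow> x = y"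
  using Y_bij by (metis bij_betw_def inj_onD)
lemma Y_surj: "T \<in> Y \<Longrightarrow> 1 \<le> v \<Longrightarrow> v \<le> g \<Longrightarrow> \<exists>x\<in>S. T x = v"
  using Y_bij by (metis atLeastAtMost_iff bij_betw_def imageE)
lemma Y_inS: "T \<in> Y \<Longrightarrow> T x = v \<Longrightarrow> 1 \<le> v \<Longrightarrow> x \<in> S"
  using Y_zero by fastforce

lemma pos_eq: "T \<in> Y \<Longrightarrow> x \<in> S \<Longrightarrow> T x = v \<Longrightarrow> pos_of T v = x"
  unfolding pos_of_def
proof (rule the_equality)
  assume a: "T \<in> Y" "x \<in> S" "T x = v"
  show "T x = v" by fact
  fix y assume "T y = v"
  moreover have "1 \<le> v" using Y_val[OF a(1,2)] a(3) by simp
  ultimately have "y \<in> S" using Y_inS[OF a(1)] by blast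
  then show "y = x" using Y_inj[OF a(1) _ a(2)] \<open>T y = v\<close> a(3) by simp
qed

lemma pi_eval:
  assumes "T \<in> Y" "P \<in> S" "Q \<in> S" "T P = t" "T Q = t + 1"
  shows "pi_ta t a T = (if fst P \<noteq> fst Q \<and> snd P \<noteq> snd Q \<and> box_dist P Q = a then swv t T else T)"
  using pos_eq[OF assms(1,2,4)] pos_eq[OF assms(1,3,5)]
  by (simp add: pi_ta_def Let_def swv_def)

lemma swap_Y:
  assumes T: "T \<in> Y" and P: "P \<in> S" and Q: "Q \<in> S" and TP: "T P = t" and TQ: "T Q = t + 1"
    and r: "fst P \<noteq> fst Q" and c: "snd P \<noteq> snd Q"
  shows "swv t T \<in> Y"
proof -
  have t1: "1 \<le> t" using Y_val[OF T P] TP by simp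
  have tg: "t < g" using Y_val[OF T Q] TQ by simp
  have b: "bij_betw (swv t T) S {1..g}"
    unfolding swv_hsw using bij_betw_trans[OF Y_bij[OF T] hsw_bij[OF t1 tg]] .
  have z: "\<forall>x. x \<notin> S \<longrightarrow> swv t T x = 0"
    using Y_zero[OF T] t1 by (simp add: swv_def)
  have rw: "\<forall>i j j'. (i, j) \<in> S \<and> (i, j') \<in> S \<and> j < j' \<longrightarrow> swv t T (i, j) < swv t T (i, j')"
  proof (intro allI impI, elim conjE)
    fix i j j' assume a: "(i, j) \<in> S" "(i, j') \<in> S" "j < j'"
    have lt: "T (i,j) < T (i,j')" using Y_row[OF T a] .
    have "\<not> (T (i,j) = t \<and> T (i,j') = t + 1)"
    proof
      assume h: "T (i,j) = t \<and> T (i,j') = t + 1"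
      then have "P = (i,j)" using Y_inj[OF T P a(1)] TP by simp
      moreover have "Q = (i,j')" using h Y_inj[OF T Q a(2)] TQ by simp
      ultimately show False using r by simp
    qed
    then show "swv t T (i, j) < swv t T (i, j')" unfolding swv_hsw using hsw_mono[OF lt] by simp
  qed
  have cl: "\<forall>i i' j. (i, j) \<in> S \<and> (i', j) \<in> S \<and> i < i' \<longrightarrow> swv t T (i, j) < swv t T (i', j)"
  proof (intro allI impI, elim conjE)
    fix i i' j assume a: "(i, j) \<in> S" "(i', j) \<in> S" "i < i'"
    have lt: "T (i,j) < T (i',j)" using Y_col[OF T a] .
    have "\<not> (T (i,j) = t \<and> T (i',j) = t + 1)"
    proof
      assume h: "T (i,j) = t \<and> T (i',j) = t + 1"
      then have "P = (i,j)" using Y_inj[OF T P a(1)] TP by simp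
      moreover have "Q = (i',j)" using h Y_inj[OF T Q a(2)] TQ by simp
      ultimately show False using c by simp
    qed
    then show "swv t T (i, j) < swv t T (i', j)" unfolding swv_hsw using hsw_mono[OF lt] by simp
  qed
  show ?thesis using b z rw cl by (simp add: Y_def)
qed

lemma swv_P: "T P = t \<Longrightarrow> swv t T P = t + 1" by (simp add: swv_def)
lemma swv_Q: "T Q = t + 1 \<Longrightarrow> swv t T Q = t" by (simp add: swv_def)
lemma swv_other: "T x \<noteq> t \<Longrightarrow> T x \<noteq> t + 1 \<Longrightarrow> swv t T x = T x" by (simp add: swv_def)

lemma box_dist_sym: "box_dist P Q = box_dist Q P" by (simp add: box_dist_def abs_minus_commute)

lemma pi_inv:
  assumes T: "T \<in> Y" and t: "1 \<le> t" "t < g"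
  shows "pi_ta t a T \<in> Y \<and> pi_ta t a (pi_ta t a T) = T"
proof -
  obtain P where P: "P \<in> S" "T P = t" using Y_surj[OF T, of t] t by auto
  obtain Q where Q: "Q \<in> S" "T Q = t + 1" using Y_surj[OF T, of "t+1"] t by auto
  show ?thesis
  proof (cases "fst P \<noteq> fst Q \<and> snd P \<noteq> snd Q \<and> box_dist P Q = a")
    case True
    have e: "pi_ta t a T = swv t T" using pi_eval[OF T P(1) Q(1) P(2) Q(2)] True by simp
    have Y': "swv t T \<in> Y" using swap_Y[OF T P(1) Q(1) P(2) Q(2)] True by simp
    have "pi_ta t a (swv t T) = swv t (swv t T)"
      using pi_eval[OF Y' Q(1) P(1) swv_Q[of T Q t, OF Q(2)] swv_P[of T P t, OF P(2)]] True box_dist_sym[of P Q] by auto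
    then show ?thesis using e Y' by simp
  next
    case False
    have e: "pi_ta t a T = T" using pi_eval[OF T P(1) Q(1) P(2) Q(2), of a] False by simp
    show ?thesis using e T by simp
  qed
qed

definition R1 where "R1 T = (\<lambda>c. T(1,c)) ` {s+1..e1}"
definition R2 where "R2 T = (\<lambda>c. T(2,c)) ` {1..e2}"

lemma S_split: "S = (\<lambda>c. (1,c)) ` {s+1..e1} \<union> (\<lambda>c. (2,c)) ` {1..e2}"
  by (auto simp: S_def)

lemma R12_union: "T \<in> Y \<Longrightarrow> R1 T \<union> R2 T = {1..g}"
proof -
  assume T: "T \<in> Y"
  have "T ` S = {1..g}" using Y_bij[OF T] by (simp add: bij_betw_def)
  then show ?thesis unfolding R1_def R2_def S_split image_Un image_image by simp
qed

lemma R12_disj: "T \<in> Y \<Longrightarrow> R1 T \<inter> R2 T = {}"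
proof -
  assume T: "T \<in> Y"
  { fix v assume "v \<in> R1 T" "v \<in> R2 T"
    then obtain c c' where "s+1 \<le> c" "c \<le> e1" "v = T(1,c)" "1 \<le> c'" "c' \<le> e2" "v = T(2,c')"
      unfolding R1_def R2_def by auto
    then have "(1::int,c) = (2,c')" using Y_inj[OF T, of "(1,c)" "(2,c')"] by simp
    then have False by simp }
  then show ?thesis by blast
qed

lemma R1_fin: "finite (R1 T)" by (simp add: R1_def)
lemma R2_fin: "finite (R2 T)" by (simp add: R2_def)

lemma inj1: assumes T: "T \<in> Y" shows "inj_on (\<lambda>c. T(1,c)) {s+1..e1}"
proof (rule inj_onI)
  fix x y assume "x \<in> {s+1..e1}" "y \<in> {s+1..e1}" "T(1,x) = T(1,y)"
  then show "x = y" using Y_inj[OF T, of "(1,x)" "(1,y)"] by simp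
qed
lemma inj2: assumes T: "T \<in> Y" shows "inj_on (\<lambda>c. T(2,c)) {1..e2}"
proof (rule inj_onI)
  fix x y assume "x \<in> {1..e2}" "y \<in> {1..e2}" "T(2,x) = T(2,y)"
  then show "x = y" using Y_inj[OF T, of "(2,x)" "(2,y)"] by simp
qed

lemma card_R1: "T \<in> Y \<Longrightarrow> card (R1 T) = nat (e1 - s)"
  unfolding R1_def using card_image[OF inj1] by simp

lemma R2_eq: "T \<in> Y \<Longrightarrow> R2 T = {1..g} - R1 T"
  using R12_union R12_disj by blast

lemma cnt1:
  assumes T: "T \<in> Y" and c: "s < c" "c \<le> e1"
  shows "card {w \<in> R1 T. w \<le> T(1,c)} = nat (c - s)"
proof -
  have "{w \<in> R1 T. w \<le> T(1,c)} = (\<lambda>c'. T(1,c')) ` {s+1..c}"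
  proof
    show "{w \<in> R1 T. w \<le> T(1,c)} \<subseteq> (\<lambda>c'. T(1,c')) ` {s+1..c}"
    proof
      fix w assume "w \<in> {w \<in> R1 T. w \<le> T(1,c)}"
      then obtain c' where c': "s+1 \<le> c'" "c' \<le> e1" "w = T(1,c')" "w \<le> T(1,c)"
        unfolding R1_def by auto
      have "c' \<le> c"
      proof (rule ccontr)
        assume "\<not> c' \<le> c"
        then have "T(1,c) < T(1,c')" using Y_row[OF T, of 1 c c'] c c' by simp
        then show False using c' by simp
      qed
      then show "w \<in> (\<lambda>c'. T(1,c')) ` {s+1..c}" using c' by auto
    qed
  next
    show "(\<lambda>c'. T(1,c')) ` {s+1..c} \<subseteq> {w \<in> R1 T. w \<le> T(1,c)}"
    proof
      fix w assume "w \<in> (\<lambda>c'. T(1,c')) ` {s+1..c}"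
      then obtain c' where c': "s+1 \<le> c'" "c' \<le> c" "w = T(1,c')" by auto
      have "T(1,c') \<le> T(1,c)"
        using Y_row[OF T, of 1 c' c] c c' by (cases "c' = c") auto
      then show "w \<in> {w \<in> R1 T. w \<le> T(1,c)}" using c c' unfolding R1_def by auto
    qed
  qed
  moreover have "inj_on (\<lambda>c'. T(1,c')) {s+1..c}"
    using inj_on_subset[OF inj1[OF T]] c by auto
  ultimately show ?thesis using card_image by fastforce
qed

lemma cnt2:
  assumes T: "T \<in> Y" and c: "0 < c" "c \<le> e2"
  shows "card {w \<in> R2 T. w \<le> T(2,c)} = nat c"
proof -
  have "{w \<in> R2 T. w \<le> T(2,c)} = (\<lambda>c'. T(2,c')) ` {1..c}"
  proof
    show "{w \<in> R2 T. w \<le> T(2,c)} \<subseteq> (\<lambda>c'. T(2,c')) ` {1..c}"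
    proof
      fix w assume "w \<in> {w \<in> R2 T. w \<le> T(2,c)}"
      then obtain c' where c': "1 \<le> c'" "c' \<le> e2" "w = T(2,c')" "w \<le> T(2,c)"
        unfolding R2_def by auto
      have "c' \<le> c"
      proof (rule ccontr)
        assume "\<not> c' \<le> c"
        then have "T(2,c) < T(2,c')" using Y_row[OF T, of 2 c c'] c c' by simp
        then show False using c' by simp
      qed
      then show "w \<in> (\<lambda>c'. T(2,c')) ` {1..c}" using c' by auto
    qed
  next
    show "(\<lambda>c'. T(2,c')) ` {1..c} \<subseteq> {w \<in> R2 T. w \<le> T(2,c)}"
    proof
      fix w assume "w \<in> (\<lambda>c'. T(2,c')) ` {1..c}"
      then obtain c' where c': "1 \<le> c'" "c' \<le> c" "w = T(2,c')" by auto
      have "T(2,c') \<le> T(2,c)"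
        using Y_row[OF T, of 2 c' c] c c' by (cases "c' = c") auto
      then show "w \<in> {w \<in> R2 T. w \<le> T(2,c)}" using c c' unfolding R2_def by auto
    qed
  qed
  moreover have "inj_on (\<lambda>c'. T(2,c')) {1..c}"
    using inj_on_subset[OF inj2[OF T]] c by auto
  ultimately show ?thesis using card_image by fastforce
qed


lemma low1: "T \<in> Y \<Longrightarrow> s < c \<Longrightarrow> c \<le> e1 \<Longrightarrow> c - s \<le> T(1,c)"
proof -
  assume T: "T \<in> Y" and c: "s < c" "c \<le> e1"
  have sub: "{w \<in> R1 T. w \<le> T(1,c)} \<subseteq> {1..T(1,c)}"
    using R12_union[OF T] by auto
  have "card {w \<in> R1 T. w \<le> T(1,c)} \<le> card {1..T(1,c)}"
    by (rule card_mono[OF _ sub]) simp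
  then show ?thesis using cnt1[OF T c] c by (simp add: nat_le_eq_zle)
qed

lemma low2: "T \<in> Y \<Longrightarrow> 0 < c \<Longrightarrow> c \<le> e2 \<Longrightarrow> c \<le> T(2,c)"
proof -
  assume T: "T \<in> Y" and c: "0 < c" "c \<le> e2"
  have sub: "{w \<in> R2 T. w \<le> T(2,c)} \<subseteq> {1..T(2,c)}"
    using R12_union[OF T] by auto
  have "card {w \<in> R2 T. w \<le> T(2,c)} \<le> card {1..T(2,c)}"
    by (rule card_mono[OF _ sub]) simp
  then show ?thesis using cnt2[OF T c] c by (simp add: nat_le_eq_zle)
qed

lemma cnt_inj:
  assumes "finite R" "a \<in> R" "b \<in> R" "card {w \<in> R. w \<le> a} = card {w \<in> R. w \<le> (b::int)}"
  shows "a = b"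
proof (rule ccontr)
  assume "a \<noteq> b"
  then consider "a < b" | "b < a" by linarith
  then show False
  proof cases
    case 1
    have "b \<notin> {w \<in> R. w \<le> a}" "b \<in> {w \<in> R. w \<le> b}" using 1 assms by auto
    moreover have "{w \<in> R. w \<le> a} \<subseteq> {w \<in> R. w \<le> b}" using 1 by auto
    ultimately have "{w \<in> R. w \<le> a} \<subset> {w \<in> R. w \<le> b}" by blast
    then have "card {w \<in> R. w \<le> a} < card {w \<in> R. w \<le> b}" by (rule psubset_card_mono[rotated]) (use assms in simp)
    then show False using assms by simp
  next
    case 2
    have "a \<notin> {w \<in> R. w \<le> b}" "a \<in> {w \<in> R. w \<le> a}" using 2 assms by auto
    moreover have "{w \<in> R. w \<le> b} \<subseteq> {w \<in> R. w \<le> a}" using 2 by auto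
    ultimately have "{w \<in> R. w \<le> b} \<subset> {w \<in> R. w \<le> a}" by blast
    then have "card {w \<in> R. w \<le> b} < card {w \<in> R. w \<le> a}" by (rule psubset_card_mono[rotated]) (use assms in simp)
    then show False using assms by simp
  qed
qed

lemma determ:
  assumes T: "T \<in> Y" and T': "T' \<in> Y" and e: "R1 T = R1 T'"
  shows "T = T'"
proof (rule ext)
  fix x
  have e2: "R2 T = R2 T'" using R2_eq[OF T] R2_eq[OF T'] e by simp
  show "T x = T' x"
  proof (cases "x \<in> S")
    case False then show ?thesis using Y_zero[OF T] Y_zero[OF T'] by simp
  next
    case True
    obtain k c where x: "x = (k,c)" by (cases x)
    from memk[OF True] x have "k = 1 \<or> k = 2" by simp
    then show ?thesis
    proof
      assume k: "k = 1"
      then have c: "s < c" "c \<le> e1" using True x by auto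
      have a: "T(1,c) \<in> R1 T" "T'(1,c) \<in> R1 T" using c e unfolding R1_def by auto
      show ?thesis using cnt_inj[OF R1_fin a] cnt1[OF T c] cnt1[OF T' c] e x k by simp
    next
      assume k: "k = 2"
      then have c: "0 < c" "c \<le> e2" using True x by auto
      have a: "T(2,c) \<in> R2 T" "T'(2,c) \<in> R2 T" using c e2 unfolding R2_def by auto
      show ?thesis using cnt_inj[OF R2_fin a] cnt2[OF T c] cnt2[OF T' c] e2 x k by simp
    qed
  qed
qed

lemma peak_col:
  assumes T: "T \<in> Y" and "(1,c1) \<in> S" "(2,c2) \<in> S" "T(1,c1) = t" "T(2,c2) = t + 1"
  shows "c2 \<le> c1"
proof (rule ccontr)
  assume "\<not> c2 \<le> c1"
  then have m: "(1,c2) \<in> S" using assms e21 by auto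
  have "T(1,c1) < T(1,c2)" using Y_row[OF T assms(2) m] \<open>\<not> c2 \<le> c1\<close> by simp
  moreover have "T(1,c2) < T(2,c2)" using Y_col[OF T m assms(3)] by simp
  ultimately show False using assms by simp
qed

lemma valley_col:
  assumes T: "T \<in> Y" and "(1,c1) \<in> S" "(2,c2) \<in> S" "T(2,c2) = t" "T(1,c1) = t + 1"
  shows "c2 < c1"
proof (rule ccontr)
  assume "\<not> c2 < c1"
  then have m: "(1,c2) \<in> S" using assms e21 by auto
  have "T(1,c1) \<le> T(1,c2)" using Y_row[OF T assms(2) m] \<open>\<not> c2 < c1\<close> by (cases "c1 = c2") auto
  moreover have "T(1,c2) < T(2,c2)" using Y_col[OF T m assms(3)] by simp
  ultimately show False using assms by simp
qed

definition Phi where "Phi T = (\<Sum>c\<in>{s+1..e1}. nat (T(1,c)))"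

lemma Phi_valley:
  assumes T: "T \<in> Y" and c1: "(1,c1) \<in> S" and c2: "(2,c2) \<in> S" and v: "T(2,c2) = k" "T(1,c1) = k + 1"
  shows "Phi (swv k T) < Phi T"
proof -
  have k1: "1 \<le> k" using Y_val[OF T c2] v by simp
  have C: "c1 \<in> {s+1..e1}" using c1 by simp
  have o: "\<And>c. c \<in> {s+1..e1} - {c1} \<Longrightarrow> swv k T (1,c) = T(1,c)"
  proof -
    fix c assume c: "c \<in> {s+1..e1} - {c1}"
    have m: "(1,c) \<in> S" using c by simp
    have "T(1,c) \<noteq> k" using Y_inj[OF T m c2] v by auto
    moreover have "T(1,c) \<noteq> k + 1" using Y_inj[OF T m c1] v c by auto
    ultimately show "swv k T (1,c) = T(1,c)" by (simp add: swv_def)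
  qed
  have "Phi (swv k T) = nat (swv k T (1,c1)) + (\<Sum>c\<in>{s+1..e1} - {c1}. nat (swv k T (1,c)))"
    unfolding Phi_def by (rule sum.remove[OF _ C]) simp
  also have "\<dots> = nat k + (\<Sum>c\<in>{s+1..e1} - {c1}. nat (T (1,c)))"
    using o v by (simp add: swv_def)
  also have "\<dots> < nat (k+1) + (\<Sum>c\<in>{s+1..e1} - {c1}. nat (T (1,c)))" using k1 by simp
  also have "\<dots> = Phi T" unfolding Phi_def using sum.remove[OF _ C, of "\<lambda>c. nat (T(1,c))"] v by simp
  finally show ?thesis .
qed

definition vfree where "vfree T \<longleftrightarrow> (\<forall>k. \<not> (k \<in> R2 T \<and> k + 1 \<in> R1 T))"

lemma vfree_R1:
  assumes T: "T \<in> Y" and vf: "vfree T"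
  shows "R1 T = {1..e1 - s}"
proof -
  have U: "R1 T \<union> R2 T = {1..g}" and D: "R1 T \<inter> R2 T = {}" using R12_union[OF T] R12_disj[OF T] by auto
  have step: "\<And>k. k \<in> R2 T \<Longrightarrow> k + 1 \<le> g \<Longrightarrow> k + 1 \<in> R2 T"
  proof -
    fix k assume k: "k \<in> R2 T" "k + 1 \<le> g"
    have "1 \<le> k" using k U by auto
    then have "k + 1 \<in> R1 T \<union> R2 T" using U k by auto
    moreover have "k + 1 \<notin> R1 T" using vf k unfolding vfree_def by blast
    ultimately show "k + 1 \<in> R2 T" by blast
  qed
  have prp: "\<And>w n. w \<in> R2 T \<Longrightarrow> w + int n \<le> g \<Longrightarrow> w + int n \<in> R2 T"
  proof -
    fix w n show "w \<in> R2 T \<Longrightarrow> w + int n \<le> g \<Longrightarrow> w + int n \<in> R2 T"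
    proof (induction n)
      case 0 then show ?case by simp
    next
      case (Suc n)
      then have "w + int n \<in> R2 T" by simp
      have e: "w + int (Suc n) = w + int n + 1" by simp
      from step[OF \<open>w + int n \<in> R2 T\<close>] Suc.prems(2) show ?case unfolding e by simp
    qed
  qed
  have ord: "\<And>v w. v \<in> R1 T \<Longrightarrow> w \<in> R2 T \<Longrightarrow> v < w"
  proof (rule ccontr)
    fix v w assume v: "v \<in> R1 T" and w: "w \<in> R2 T" and n: "\<not> v < w"
    have "v \<le> g" using v U by auto
    then have "w + int (nat (v - w)) \<in> R2 T" using prp[OF w, of "nat (v - w)"] n by simp
    then have "v \<in> R2 T" using n by simp
    then show False using v D by blast
  qed
  have down: "\<And>v w. v \<in> R1 T \<Longrightarrow> 1 \<le> w \<Longrightarrow> w \<le> v \<Longrightarrow> w \<in> R1 T"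
  proof -
    fix v w assume v: "v \<in> R1 T" and w: "1 \<le> w" "w \<le> v"
    have "v \<le> g" using v U by auto
    then have "w \<in> R1 T \<union> R2 T" using U w by auto
    moreover have "w \<notin> R2 T" using ord[OF v] w by force
    ultimately show "w \<in> R1 T" by blast
  qed
  have cR: "card (R1 T) = nat (e1 - s)" using card_R1[OF T] .
  have sub: "R1 T \<subseteq> {1..e1 - s}"
  proof
    fix v assume v: "v \<in> R1 T"
    have v1: "1 \<le> v" using v U by auto
    have "{1..v} \<subseteq> R1 T" using down[OF v] by auto
    then have "card {1..v} \<le> card (R1 T)" by (rule card_mono[OF R1_fin])
    then have "v \<le> e1 - s" using cR v1 by simp
    then show "v \<in> {1..e1 - s}" using v1 by simp
  qed
  show ?thesis by (rule card_subset_eq[OF _ sub]) (use cR in simp_all)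
qed

lemma peakR1:
  assumes T: "T \<in> Y" and m: "(1,d1) \<in> S" "(2,d2) \<in> S" and v: "T(1,d1) = t" "T(2,d2) = t + 1"
    and dist: "box_dist (1,d1) (2,d2) = s + t" and p: "e1 - s = t"
  shows "R1 T = {1..t}"
proof -
  have le: "d2 \<le> d1" using peak_col[OF T m v] .
  have l1: "d1 - s \<le> t" using low1[OF T, of d1] m v by simp
  have l2: "1 \<le> d2" using m by simp
  have "1 + (d1 - d2) = s + t" using dist le by (simp add: box_dist_def)
  then have d1: "d1 = s + t" using l1 l2 by linarith
  have c: "card {w \<in> R1 T. w \<le> t} = nat t" using cnt1[OF T, of d1] m v d1 by simp
  have sub: "{w \<in> R1 T. w \<le> t} \<subseteq> {1..t}" using R12_union[OF T] by auto
  have e: "{w \<in> R1 T. w \<le> t} = {1..t}" by (rule card_subset_eq[OF _ sub]) (use c in simp_all)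
  have sub2: "{1..t} \<subseteq> R1 T" using e by blast
  show ?thesis using card_subset_eq[OF R1_fin sub2] card_R1[OF T] p by simp
qed

definition gens where "gens = {restrict (pi_ta t a) Y | t a. 1 \<le> t \<and> t < g \<and> 0 < a}"
definition GG where "GG = generate (BijGroup Y) gens"

lemma pi_Bij: "1 \<le> t \<Longrightarrow> t < g \<Longrightarrow> restrict (pi_ta t a) Y \<in> Bij Y"
  by (rule invol_Bij) (use pi_inv in auto)

lemma gens_sub: "gens \<subseteq> carrier (BijGroup Y)"
  using pi_Bij unfolding gens_def by (auto simp: BijGroup_def)

lemma GG_subgroup: "subgroup GG (BijGroup Y)"
  unfolding GG_def by (rule group.generate_is_subgroup[OF group_BijGroup gens_sub])

lemma gen_in: "1 \<le> t \<Longrightarrow> t < g \<Longrightarrow> 0 < a \<Longrightarrow> restrict (pi_ta t a) Y \<in> GG"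
  unfolding GG_def by (rule generate.incl) (auto simp: gens_def)

lemma mult_in: "x \<in> GG \<Longrightarrow> y \<in> GG \<Longrightarrow> x \<otimes>\<^bsub>BijGroup Y\<^esub> y \<in> GG"
  using subgroup.m_closed[OF GG_subgroup] by blast

lemma conj_pi:
  assumes "tau Y u v \<in> GG" "u \<in> Y" "v \<in> Y" "1 \<le> t" "t < g" "0 < a"
  shows "tau Y (pi_ta t a u) (pi_ta t a v) \<in> GG"
proof -
  let ?f = "restrict (pi_ta t a) Y"
  have fi: "?f \<in> GG" using gen_in assms by simp
  have e: "?f \<otimes>\<^bsub>BijGroup Y\<^esub> (tau Y u v \<otimes>\<^bsub>BijGroup Y\<^esub> ?f) = tau Y (?f u) (?f v)"
    by (rule conj_tau[OF pi_Bij]) (use assms pi_inv in auto)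
  have "?f \<otimes>\<^bsub>BijGroup Y\<^esub> (tau Y u v \<otimes>\<^bsub>BijGroup Y\<^esub> ?f) \<in> GG"
    using mult_in[OF fi mult_in[OF assms(1) fi]] .
  then show ?thesis using e assms by simp
qed

lemma tau_invol: "x \<in> Y \<Longrightarrow> y \<in> Y \<Longrightarrow> z \<in> Y \<Longrightarrow> tau Y x y (tau Y x y z) = z"
  by (auto simp: tau_def)

lemma conj_tt:
  assumes "tau Y x y \<in> GG" "tau Y x z \<in> GG" "x \<in> Y" "y \<in> Y" "z \<in> Y" "y \<noteq> x" "y \<noteq> z"
  shows "tau Y z y \<in> GG"
proof -
  let ?f = "tau Y x z"
  have e: "?f \<otimes>\<^bsub>BijGroup Y\<^esub> (tau Y x y \<otimes>\<^bsub>BijGroup Y\<^esub> ?f) = tau Y (?f x) (?f y)"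
    by (rule conj_tau[OF tau_Bij]) (use assms tau_invol in auto)
  have "?f \<otimes>\<^bsub>BijGroup Y\<^esub> (tau Y x y \<otimes>\<^bsub>BijGroup Y\<^esub> ?f) \<in> GG"
    using mult_in[OF assms(2) mult_in[OF assms(1) assms(2)]] .
  moreover have "?f x = z" "?f y = y" using assms by (auto simp: tau_def)
  ultimately show ?thesis using e by simp
qed

lemma dist_pos: "0 < box_dist (1,c1) (2,c2)" by (simp add: box_dist_def)
lemma dist_pos': "0 < box_dist (2,c1) (1,c2)" by (simp add: box_dist_def)

lemma base:
  assumes u: "u \<in> Y" and vf: "vfree u" and m: "(1,c1) \<in> S" "(2,c2) \<in> S"
    and v: "u(1,c1) = t" "u(2,c2) = t + 1" and cd: "c1 \<noteq> c2"
  shows "tau Y u (swv t u) \<in> GG"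
proof -
  define a where "a = box_dist (1,c1) (2,c2)"
  have t1: "1 \<le> t" using Y_val[OF u m(1)] v by simp
  have tg: "t < g" using Y_val[OF u m(2)] v by simp
  have R1u: "R1 u = {1..e1 - s}" using vfree_R1[OF u vf] .
  have tR1: "t \<in> R1 u" using m v unfolding R1_def by force
  have t1R2: "t+1 \<in> R2 u" unfolding R2_def by (rule image_eqI[of _ _ c2]) (use m v in auto)
  have nR1: "t+1 \<notin> R1 u" using t1R2 R12_disj[OF u] by blast
  have p: "e1 - s = t" using tR1 nR1 R1u t1 by auto
  have R1u': "R1 u = {1..t}" using R1u p by simp
  have c1v: "c1 = s + t"
  proof -
    have "card {w \<in> R1 u. w \<le> u(1,c1)} = nat (c1 - s)" using cnt1[OF u] m by simp
    moreover have "{w \<in> R1 u. w \<le> u(1,c1)} = {1..t}" using R1u' v by auto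
    ultimately have "nat t = nat (c1 - s)" by simp
    then show ?thesis using m t1 by (simp add: eq_nat_nat_iff)
  qed
  have c2v: "c2 = 1"
  proof -
    have "card {w \<in> R2 u. w \<le> u(2,c2)} = nat c2" using cnt2[OF u] m by simp
    moreover have "{w \<in> R2 u. w \<le> u(2,c2)} = {t+1}" using R2_eq[OF u] R1u' v tg t1 by auto
    ultimately show ?thesis using m by simp
  qed
  have av: "a = s + t" using c1v c2v s0 t1 by (simp add: a_def box_dist_def)
  have a0: "0 < a" unfolding a_def by (rule dist_pos)
  have sv: "swv t u \<in> Y" using swap_Y[OF u m(1) m(2) v] cd by simp
  have ne: "swv t u \<noteq> u"
  proof
    assume "swv t u = u"
    then have "swv t u (1,c1) = u (1,c1)" by simp
    then show False using v by (simp add: swv_def)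
  qed
  have chk: "pi_ta t a T = tau Y u (swv t u) T" if T: "T \<in> Y" for T
  proof -
    obtain P where P: "P \<in> S" "T P = t" using Y_surj[OF T, of t] t1 tg by auto
    obtain Q where Q: "Q \<in> S" "T Q = t + 1" using Y_surj[OF T, of "t+1"] t1 tg by auto
    show ?thesis
    proof (cases "fst P \<noteq> fst Q \<and> snd P \<noteq> snd Q \<and> box_dist P Q = a")
      case True
      have e: "pi_ta t a T = swv t T" using pi_eval[OF T P(1) Q(1) P(2) Q(2)] True by simp
      have "(fst P = 1 \<and> fst Q = 2) \<or> (fst P = 2 \<and> fst Q = 1)" using memk[OF P(1)] memk[OF Q(1)] True by auto
      then show ?thesis
      proof
        assume f: "fst P = 1 \<and> fst Q = 2"
        obtain d1 d2 where PQ: "P = (1,d1)" "Q = (2,d2)" using f by (metis prod.collapse)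
        have "R1 T = {1..t}" using peakR1[OF T, of d1 d2 t] P Q PQ True av p by simp
        then have "T = u" using determ[OF T u] R1u' by simp
        then show ?thesis using e ne u sv by (simp add: tau_def)
      next
        assume f: "fst P = 2 \<and> fst Q = 1"
        obtain d1 d2 where PQ: "Q = (1,d1)" "P = (2,d2)" using f by (metis prod.collapse)
        have TY': "swv t T \<in> Y" using swap_Y[OF T P(1) Q(1) P(2) Q(2)] True by simp
        have w1: "swv t T (1,d1) = t" using Q PQ by (simp add: swv_def)
        have w2: "swv t T (2,d2) = t + 1" using P PQ by (simp add: swv_def)
        have di: "box_dist (1,d1) (2,d2) = s + t" using True PQ av box_dist_sym[of P Q] by simp
        have "R1 (swv t T) = {1..t}" using peakR1[OF TY', of d1 d2 t] P Q PQ w1 w2 di p by simp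
        then have "swv t T = u" using determ[OF TY' u] R1u' by simp
        then have Tu: "T = swv t u" by (metis swv_swv)
        show ?thesis using e ne u sv Tu by (simp add: tau_def)
      qed
    next
      case False
      have e: "pi_ta t a T = T" using pi_eval[OF T P(1) Q(1) P(2) Q(2), of a] False by simp
      have n1: "T \<noteq> u"
      proof
        assume "T = u"
        then have "P = (1,c1)" "Q = (2,c2)" using Y_inj[OF T P(1) m(1)] Y_inj[OF T Q(1) m(2)] P Q v by auto
        then show False using False cd a_def by simp
      qed
      have n2: "T \<noteq> swv t u"
      proof
        assume h: "T = swv t u"
        have "T (2,c2) = t" "T (1,c1) = t + 1" using h v by (auto simp: swv_def)
        then have "P = (2,c2)" "Q = (1,c1)" using Y_inj[OF T P(1) m(2)] Y_inj[OF T Q(1) m(1)] P Q by auto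
        then show False using False cd a_def box_dist_sym[of "(1,c1)" "(2,c2)"] by simp
      qed
      show ?thesis using e n1 n2 T by (simp add: tau_def)
    qed
  qed
  have "restrict (pi_ta t a) Y = tau Y u (swv t u)"
  proof (rule ext)
    fix T show "restrict (pi_ta t a) Y T = tau Y u (swv t u) T"
      using chk[of T] by (cases "T \<in> Y") (simp_all add: tau_def)
  qed
  then show ?thesis using gen_in[OF t1 tg a0] by simp
qed

lemma peak_aux:
  "Phi u = n \<Longrightarrow> u \<in> Y \<Longrightarrow> (1,c1) \<in> S \<Longrightarrow> (2,c2) \<in> S \<Longrightarrow> u(1,c1) = t \<Longrightarrow> u(2,c2) = t + 1
   \<Longrightarrow> c1 \<noteq> c2 \<Longrightarrow> tau Y u (swv t u) \<in> GG"
proof (induction n arbitrary: u t c1 c2 rule: less_induct)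
  case (less n u t c1 c2)
  note u = less.prems(2) and m = less.prems(3,4) and v = less.prems(5,6) and cd = less.prems(7)
  have IH: "\<And>u' t' d1 d2. Phi u' < Phi u \<Longrightarrow> u' \<in> Y \<Longrightarrow> (1,d1) \<in> S \<Longrightarrow> (2,d2) \<in> S \<Longrightarrow>
      u'(1,d1) = t' \<Longrightarrow> u'(2,d2) = t' + 1 \<Longrightarrow> d1 \<noteq> d2 \<Longrightarrow> tau Y u' (swv t' u') \<in> GG"
    using less.IH less.prems(1) by blast
  define a where "a = box_dist (1,c1) (2,c2)"
  have t1: "1 \<le> t" using Y_val[OF u m(1)] v by simp
  have tg: "t < g" using Y_val[OF u m(2)] v by simp
  have a0: "0 < a" unfolding a_def by (rule dist_pos)
  have pu: "pi_ta t a u = swv t u" using pi_eval[OF u m(1) m(2) v] cd a_def by simp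
  have su: "swv t u \<in> Y" using swap_Y[OF u m(1) m(2) v] cd by simp
  have ne: "u \<noteq> swv t u"
  proof
    assume "u = swv t u"
    then have "u (1,c1) = swv t u (1,c1)" by simp
    then show False using v by (simp add: swv_def)
  qed
  have fin: "tau Y u (swv t u) \<in> GG" if w: "w \<in> Y" "tau Y w u \<in> GG" "pi_ta t a w = w" "u \<noteq> w" for w
  proof -
    have "tau Y (pi_ta t a w) (pi_ta t a u) \<in> GG" using conj_pi[OF w(2) w(1) u t1 tg a0] .
    then have h: "tau Y w (swv t u) \<in> GG" using w(3) pu by simp
    have "tau Y (swv t u) u \<in> GG" using conj_tt[OF w(2) h w(1) u su] w(4) ne by simp
    then show ?thesis by (simp add: tau_sym)
  qed
  show ?case
  proof (cases "\<exists>c3. (1,c3) \<in> S \<and> u(1,c3) = t + 2")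
    case True
    then obtain c3 where c3: "(1,c3) \<in> S" "u(1,c3) = t + 2" by blast
    have c3': "u(1,c3) = t + 1 + 1" using c3 by simp
    have vc: "c2 < c3" using valley_col[OF u c3(1) m(2) v(2) c3'] .
    define w where "w = swv (t+1) u"
    have wY: "w \<in> Y" unfolding w_def using swap_Y[OF u m(2) c3(1) v(2) c3'] vc by simp
    have ph: "Phi w < Phi u" unfolding w_def by (rule Phi_valley[OF u c3(1) m(2) v(2) c3'])
    have w1: "w(1,c1) = t" using v unfolding w_def by (simp add: swv_def)
    have w3: "w(1,c3) = t + 1" using c3' unfolding w_def by (simp add: swv_def)
    have w2: "w(2,c2) = t + 1 + 1" using v unfolding w_def by (simp add: swv_def)
    have "tau Y w (swv (t+1) w) \<in> GG" using IH[OF ph wY c3(1) m(2) w3 w2] vc by simp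
    then have tw: "tau Y w u \<in> GG" unfolding w_def by simp
    have pw: "pi_ta t a w = w" using pi_eval[OF wY m(1) c3(1) w1 w3, of a] by simp
    have uw: "u \<noteq> w"
    proof
      assume "u = w" then have "u(1,c3) = w(1,c3)" by simp
      then show False using c3 w3 by simp
    qed
    show ?thesis using fin[OF wY tw pw uw] .
  next
    case nA: False
    show ?thesis
    proof (cases "\<exists>c0. (2,c0) \<in> S \<and> u(2,c0) = t - 1")
      case True
      then obtain c0 where c0: "(2,c0) \<in> S" "u(2,c0) = t - 1" by blast
      have c1': "u(1,c1) = t - 1 + 1" using v by simp
      have vc: "c0 < c1" using valley_col[OF u m(1) c0(1) c0(2) c1'] .
      define w where "w = swv (t-1) u"
      have wY: "w \<in> Y" unfolding w_def using swap_Y[OF u c0(1) m(1) c0(2) c1'] vc by simp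
      have ph: "Phi w < Phi u" unfolding w_def by (rule Phi_valley[OF u m(1) c0(1) c0(2) c1'])
      have w1: "w(1,c1) = t - 1" using v unfolding w_def by (simp add: swv_def)
      have w0: "w(2,c0) = t - 1 + 1" using c0 unfolding w_def by (simp add: swv_def)
      have w0': "w(2,c0) = t" using w0 by simp
      have w2: "w(2,c2) = t + 1" using v unfolding w_def by (simp add: swv_def)
      have "tau Y w (swv (t-1) w) \<in> GG" using IH[OF ph wY m(1) c0(1) w1 w0] vc by simp
      then have tw: "tau Y w u \<in> GG" unfolding w_def by simp
      have pw: "pi_ta t a w = w" using pi_eval[OF wY c0(1) m(2) w0' w2, of a] by simp
      have uw: "u \<noteq> w"
      proof
        assume "u = w" then have "u(1,c1) = w(1,c1)" by simp
        then show False using v w1 by simp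
      qed
      show ?thesis using fin[OF wY tw pw uw] .
    next
      case nB: False
      show ?thesis
      proof (cases "vfree u")
        case True then show ?thesis using base[OF u True m v cd] by simp
      next
        case False
        then obtain k where k: "k \<in> R2 u" "k + 1 \<in> R1 u" unfolding vfree_def by blast
        obtain d2 where d2': "d2 \<in> {1..e2}" "k = u(2,d2)" using k(1) unfolding R2_def by (rule imageE)
        then have d2: "(2,d2) \<in> S" "u(2,d2) = k" by auto
        obtain d1 where d1': "d1 \<in> {s+1..e1}" "k + 1 = u(1,d1)" using k(2) unfolding R1_def by (rule imageE)
        then have d1: "(1,d1) \<in> S" "u(1,d1) = k + 1" by auto
        have kt: "k \<noteq> t"
        proof
          assume "k = t" then have "u(2,d2) = u(1,c1)" using d2 v by simp
          then show False using Y_inj[OF u d2(1) m(1)] by simp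
        qed
        have kt1: "k \<noteq> t + 1"
        proof
          assume "k = t + 1" then have "u(1,d1) = t + 2" using d1 by simp
          then show False using nA d1(1) by blast
        qed
        have kt2: "k + 1 \<noteq> t"
        proof
          assume "k + 1 = t" then have "u(2,d2) = t - 1" using d2 by simp
          then show False using nB d2(1) by blast
        qed
        have vc: "d2 < d1" using valley_col[OF u d1(1) d2(1) d2(2) d1(2)] .
        define w where "w = swv k u"
        have wY: "w \<in> Y" unfolding w_def using swap_Y[OF u d2(1) d1(1) d2(2) d1(2)] vc by simp
        have ph: "Phi w < Phi u" unfolding w_def by (rule Phi_valley[OF u d1(1) d2(1) d2(2) d1(2)])
        have w1: "w(1,c1) = t" using v kt kt2 unfolding w_def by (simp add: swv_def)
        have w2: "w(2,c2) = t + 1" using v kt kt1 unfolding w_def by (simp add: swv_def)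
        have IHw: "tau Y w (swv t w) \<in> GG" using IH[OF ph wY m(1) m(2) w1 w2 cd] .
        define b where "b = box_dist (2,d2) (1,d1)"
        have k1: "1 \<le> k" using Y_val[OF u d2(1)] d2 by simp
        have kg: "k < g" using Y_val[OF u d1(1)] d1 by simp
        have b0: "0 < b" unfolding b_def by (rule dist_pos')
        have wd1: "w(1,d1) = k" using d1 unfolding w_def by (simp add: swv_def)
        have wd2: "w(2,d2) = k + 1" using d2 unfolding w_def by (simp add: swv_def)
        have pw: "pi_ta k b w = u"
          using pi_eval[OF wY d1(1) d2(1) wd1 wd2, of b] vc box_dist_sym[of "(2,d2)" "(1,d1)"]
          unfolding b_def w_def by simp
        define x where "x = swv t w"
        have xY: "x \<in> Y" unfolding x_def using swap_Y[OF wY m(1) m(2) w1 w2] cd by simp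
        have xd1: "x(1,d1) = k" using wd1 kt kt1 kt2 unfolding x_def by (simp add: swv_def)
        have xd2: "x(2,d2) = k + 1" using wd2 kt kt1 kt2 unfolding x_def by (simp add: swv_def)
        have "pi_ta k b x = swv k x"
          using pi_eval[OF xY d1(1) d2(1) xd1 xd2, of b] vc box_dist_sym[of "(2,d2)" "(1,d1)"]
          unfolding b_def by simp
        also have "\<dots> = swv t (swv k w)" unfolding x_def using swv_comm[OF kt kt1 kt2] by simp
        also have "\<dots> = swv t u" unfolding w_def by simp
        finally have px: "pi_ta k b x = swv t u" .
        have "tau Y (pi_ta k b w) (pi_ta k b x) \<in> GG" using conj_pi[OF _ wY xY k1 kg b0] IHw x_def by simp
        then show ?thesis using pw px by simp
      qed
    qed
  qed
qed

lemma peak: "u \<in> Y \<Longrightarrow> (1,c1) \<in> S \<Longrightarrow> (2,c2) \<in> S \<Longrightarrow> u(1,c1) = t \<Longrightarrow> u(2,c2) = t + 1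
   \<Longrightarrow> c1 \<noteq> c2 \<Longrightarrow> tau Y u (swv t u) \<in> GG"
  using peak_aux by blast

lemma down_step:
  assumes u: "u \<in> Y" and nv: "\<not> vfree u"
  shows "\<exists>u'. u' \<in> Y \<and> Phi u' < Phi u \<and> tau Y u' u \<in> GG \<and> u' \<noteq> u"
proof -
  obtain k where k: "k \<in> R2 u" "k + 1 \<in> R1 u" using nv unfolding vfree_def by blast
  obtain d2 where d2': "d2 \<in> {1..e2}" "k = u(2,d2)" using k(1) unfolding R2_def by (rule imageE)
  then have d2: "(2,d2) \<in> S" "u(2,d2) = k" by auto
  obtain d1 where d1': "d1 \<in> {s+1..e1}" "k + 1 = u(1,d1)" using k(2) unfolding R1_def by (rule imageE)
  then have d1: "(1,d1) \<in> S" "u(1,d1) = k + 1" by auto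
  have vc: "d2 < d1" using valley_col[OF u d1(1) d2(1) d2(2) d1(2)] .
  define w where "w = swv k u"
  have wY: "w \<in> Y" unfolding w_def using swap_Y[OF u d2(1) d1(1) d2(2) d1(2)] vc by simp
  have ph: "Phi w < Phi u" unfolding w_def by (rule Phi_valley[OF u d1(1) d2(1) d2(2) d1(2)])
  have wd1: "w(1,d1) = k" using d1 unfolding w_def by (simp add: swv_def)
  have wd2: "w(2,d2) = k + 1" using d2 unfolding w_def by (simp add: swv_def)
  have "tau Y w (swv k w) \<in> GG" using peak[OF wY d1(1) d2(1) wd1 wd2] vc by simp
  then have t: "tau Y w u \<in> GG" unfolding w_def by simp
  have "w \<noteq> u"
  proof
    assume "w = u" then have "w(1,d1) = u(1,d1)" by simp
    then show False using wd1 d1 by simp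
  qed
  then show ?thesis using wY ph t by blast
qed

lemma conn_aux: "Phi u + Phi v = n \<Longrightarrow> u \<in> Y \<Longrightarrow> v \<in> Y \<Longrightarrow> u \<noteq> v \<Longrightarrow> tau Y u v \<in> GG"
proof (induction n arbitrary: u v rule: less_induct)
  case (less n u v)
  note u = less.prems(2) and v = less.prems(3) and uv = less.prems(4)
  have IH: "\<And>u' v'. Phi u' + Phi v' < Phi u + Phi v \<Longrightarrow> u' \<in> Y \<Longrightarrow> v' \<in> Y \<Longrightarrow> u' \<noteq> v'
     \<Longrightarrow> tau Y u' v' \<in> GG" using less.IH less.prems(1) by blast
  show ?case
  proof (cases "vfree u")
    case False
    then obtain u' where u': "u' \<in> Y" "Phi u' < Phi u" "tau Y u' u \<in> GG" "u' \<noteq> u"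
      using down_step[OF u] by blast
    show ?thesis
    proof (cases "u' = v")
      case True then show ?thesis using u' by (simp add: tau_sym)
    next
      case False
      have "tau Y u' v \<in> GG" using IH[OF _ u'(1) v False] u'(2) by simp
      from conj_tt[OF this u'(3) u'(1) v u] False uv show ?thesis by simp
    qed
  next
    case vu: True
    show ?thesis
    proof (cases "vfree v")
      case False
      then obtain v' where v': "v' \<in> Y" "Phi v' < Phi v" "tau Y v' v \<in> GG" "v' \<noteq> v"
        using down_step[OF v] by blast
      show ?thesis
      proof (cases "v' = u")
        case True then show ?thesis using v' by simp
      next
        case False
        have "tau Y u v' \<in> GG" using IH[OF _ u v'(1)] v'(2) False by simp
        then have "tau Y v' u \<in> GG" by (simp add: tau_sym)
        from conj_tt[OF this v'(3) v'(1) u v] False uv have "tau Y v u \<in> GG" by simp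
        then show ?thesis by (simp add: tau_sym)
      qed
    next
      case True
      have "u = v" using determ[OF u v] vfree_R1[OF u vu] vfree_R1[OF v True] by simp
      then show ?thesis using uv by simp
    qed
  qed
qed

lemma conn: "u \<in> Y \<Longrightarrow> v \<in> Y \<Longrightarrow> u \<noteq> v \<Longrightarrow> tau Y u v \<in> GG"
  using conn_aux by blast

lemma S_fin: "finite S" unfolding S_split by simp

lemma Y_fin: "finite Y"
proof (rule inj_on_finite[of "\<lambda>T. restrict T S" Y "PiE S (\<lambda>_. {1..g})"])
  show "inj_on (\<lambda>T. restrict T S) Y"
  proof (rule inj_onI)
    fix T T' assume T: "T \<in> Y" and T': "T' \<in> Y" and e: "restrict T S = restrict T' S"
    show "T = T'"
    proof (rule ext)
      fix x show "T x = T' x"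
      proof (cases "x \<in> S")
        case True then show ?thesis using fun_cong[OF e, of x] by simp
      next
        case False then show ?thesis using Y_zero[OF T] Y_zero[OF T'] by simp
      qed
    qed
  qed
  show "(\<lambda>T. restrict T S) ` Y \<subseteq> PiE S (\<lambda>_. {1..g})"
    using Y_val by fastforce
  show "finite (PiE S (\<lambda>_. {1..g}))" by (rule finite_PiE[OF S_fin]) simp
qed

lemma one_in: "(\<lambda>x\<in>Y. x) \<in> GG"
  using subgroup.one_closed[OF GG_subgroup] by (simp add: BijGroup_def)

lemma all_aux: "card {z \<in> Y. f z \<noteq> z} = n \<Longrightarrow> f \<in> Bij Y \<Longrightarrow> f \<in> GG"
proof (induction n arbitrary: f rule: less_induct)
  case (less n f)
  note f = less.prems(2)
  have fY: "\<And>z. z \<in> Y \<Longrightarrow> f z \<in> Y" using f by (auto simp: Bij_def bij_betw_def)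
  have finj: "inj_on f Y" using f by (auto simp: Bij_def bij_betw_def)
  have fext: "f \<in> extensional Y" using f by (simp add: Bij_def)
  show ?case
  proof (cases "{z \<in> Y. f z \<noteq> z} = {}")
    case True
    have "f = (\<lambda>x\<in>Y. x)"
    proof (rule ext)
      fix x show "f x = (\<lambda>x\<in>Y. x) x"
        using True fext by (cases "x \<in> Y") (auto simp: extensional_def)
    qed
    then show ?thesis using one_in by (simp only:)
  next
    case False
    then obtain z where z: "z \<in> Y" "f z \<noteq> z" by blast
    define y where "y = f z"
    have yY: "y \<in> Y" using fY[OF z(1)] y_def by simp
    have tz: "tau Y y z \<in> GG" using conn[OF yY z(1)] z(2) y_def by simp
    have tb: "tau Y y z \<in> Bij Y" by (rule tau_Bij[OF yY z(1)])
    define h where "h = compose Y (tau Y y z) f"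
    have hB: "h \<in> Bij Y" unfolding h_def by (rule compose_Bij[OF tb f])
    have sub: "{w \<in> Y. h w \<noteq> w} \<subseteq> {w \<in> Y. f w \<noteq> w} - {z}"
    proof
      fix w assume w: "w \<in> {w \<in> Y. h w \<noteq> w}"
      then have wY: "w \<in> Y" by simp
      have hz: "h z = z" using z yY unfolding h_def y_def by (simp add: compose_def tau_def)
      have "f w \<noteq> w"
      proof
        assume fw: "f w = w"
        have "w \<noteq> y"
        proof
          assume "w = y"
          then have "f w = f z" using fw y_def by simp
          then have "w = z" using inj_onD[OF finj _ wY z(1)] by simp
          then show False using fw z(2) by simp
        qed
        moreover have "w \<noteq> z" using fw z(2) by auto
        ultimately have "h w = w" using wY fw unfolding h_def by (simp add: compose_def tau_def)
        then show False using w by simp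
      qed
      moreover have "w \<noteq> z" using w hz by auto
      ultimately show "w \<in> {w \<in> Y. f w \<noteq> w} - {z}" using wY by simp
    qed
    have "card {w \<in> Y. h w \<noteq> w} < card {w \<in> Y. f w \<noteq> w}"
    proof -
      have "card {w \<in> Y. h w \<noteq> w} \<le> card ({w \<in> Y. f w \<noteq> w} - {z})"
        by (rule card_mono[OF _ sub]) (use Y_fin in simp)
      also have "\<dots> < card {w \<in> Y. f w \<noteq> w}"
        by (rule card_Diff1_less) (use Y_fin z in simp_all)
      finally show ?thesis .
    qed
    then have hG: "h \<in> GG" using less.IH less.prems(1) hB by blast
    have "compose Y (tau Y y z) h = f"
    proof (rule ext)
      fix x show "compose Y (tau Y y z) h x = f x"
      proof (cases "x \<in> Y")
        case True then show ?thesis unfolding h_def using tau_invol[OF yY z(1) fY[OF True]]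
          by (simp add: compose_def fY)
      next
        case False then show ?thesis using fext by (simp add: compose_def extensional_def)
      qed
    qed
    then have "tau Y y z \<otimes>\<^bsub>BijGroup Y\<^esub> h = f" using BG_mult[OF tb hB] by simp
    then show ?thesis using mult_in[OF tz hG] by simp
  qed
qed

lemma GG_eq: "GG = carrier (BijGroup Y)"
proof
  show "GG \<subseteq> carrier (BijGroup Y)" using subgroup.subset[OF GG_subgroup] .
  show "carrier (BijGroup Y) \<subseteq> GG" using all_aux by (auto simp: BijGroup_def)
qed

end

lemma sum_list2: "length xs = 2 \<Longrightarrow> sum_list xs = xs!0 + (xs!1 :: int)"
  by (auto simp: numeral_2_eq_2 length_Suc_conv)

theorem mainTheorem11:
  fixes g d :: int and r :: nat and al be :: "int list"
  assumes "r = 1"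
    and "ram_seq d r al" and "ram_seq d r be"
    and "g - d + int r \<ge> 0"
    and "brill_noether_rho g r d al be = 0"
  shows "EH_group g r d al be = carrier (BijGroup (YT g r d al be))"
proof -
  have ra: "ram_seq d 1 al" and rb: "ram_seq d 1 be" and m0: "g - d + 1 \<ge> 0"
    and rho: "brill_noether_rho g 1 d al be = 0" using assms by auto
  have la: "length al = 2" "al!0 \<le> d - 1" "0 \<le> al!1" "al!1 \<le> al!0"
    using ra unfolding ram_seq_def by auto
  have lb: "length be = 2" "be!0 \<le> d - 1" "0 \<le> be!1" "be!1 \<le> be!0"
    using rb unfolding ram_seq_def by auto
  define s where "s = al!0 - al!1"
  define e1 where "e1 = al!0 + (g - d + 1) + be!0"
  define e2 where "e2 = al!0 + (g - d + 1) + be!1"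
  have Seq: "skew_shape g 1 d al be = {(k,c). (k = 1 \<and> s < c \<and> c \<le> e1) \<or> (k = 2 \<and> 0 < c \<and> c \<le> e2)}"
  proof -
    have "\<And>k c. (1 \<le> k \<and> k \<le> int 1 + 1 \<and> al ! 0 - al ! nat (int 1 + 1 - k) < c \<and>
        c \<le> al ! 0 + (g - d + int 1) + be ! nat (k - 1))
      \<longleftrightarrow> ((k = 1 \<and> s < c \<and> c \<le> e1) \<or> (k = 2 \<and> 0 < c \<and> c \<le> e2))"
    proof -
      fix k c :: int
      show "(1 \<le> k \<and> k \<le> int 1 + 1 \<and> al ! 0 - al ! nat (int 1 + 1 - k) < c \<and>
        c \<le> al ! 0 + (g - d + int 1) + be ! nat (k - 1))
      \<longleftrightarrow> ((k = 1 \<and> s < c \<and> c \<le> e1) \<or> (k = 2 \<and> 0 < c \<and> c \<le> e2))"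
      proof (cases "k = 1 \<or> k = 2")
        case True then show ?thesis by (auto simp: s_def e1_def e2_def)
      next
        case False then show ?thesis by auto
      qed
    qed
    then show ?thesis unfolding skew_shape_def by auto
  qed
  interpret T: tab g s e1 e2 "skew_shape g 1 d al be" "YT g 1 d al be"
  proof
    show "0 \<le> s" using la by (simp add: s_def)
    show "e2 \<le> e1" using lb by (simp add: e1_def e2_def)
    show "0 \<le> e2" using la lb m0 by (simp add: e2_def)
    show "s \<le> e1" using la lb m0 by (simp add: s_def e1_def)
    show "g = e1 - s + e2"
      using rho la(1) lb(1) sum_list2[OF la(1)] sum_list2[OF lb(1)]
      by (simp add: brill_noether_rho_def s_def e1_def e2_def)
    show "skew_shape g 1 d al be = {(k,c). (k = 1 \<and> s < c \<and> c \<le> e1) \<or> (k = 2 \<and> 0 < c \<and> c \<le> e2)}"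
      by (rule Seq)
    show "YT g 1 d al be = {T. bij_betw T (skew_shape g 1 d al be) {1..g} \<and>
      (\<forall>x. x \<notin> skew_shape g 1 d al be \<longrightarrow> T x = 0) \<and>
      (\<forall>i j j'. (i, j) \<in> skew_shape g 1 d al be \<and> (i, j') \<in> skew_shape g 1 d al be \<and> j < j' \<longrightarrow> T (i, j) < T (i, j')) \<and>
      (\<forall>i i' j. (i, j) \<in> skew_shape g 1 d al be \<and> (i', j) \<in> skew_shape g 1 d al be \<and> i < i' \<longrightarrow> T (i, j) < T (i', j))}"
      by (rule YT_def)
  qed
  have "EH_group g 1 d al be = T.GG" unfolding EH_group_def T.GG_def T.gens_def by simp
  then show ?thesis using T.GG_eq assms(1) by simp
qed

end
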